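(* Consider companies $i$ with parameters $\pi^0_i,\pi^1_i,\gamma_i>0$, $\mathrm{E}^{\mathrm{bau}}_i=\pi^0_i/\pi^1_i$, $\varrho_i=1/\pi^1_i+1/\gamma_i$, and a penalty $\lambda>0$ with $\lambda\varrho_i<\mathrm{E}^{\mathrm{bau}}_i$ for all $i$. Under the market scheme, for each company $i$: (1) If company $i$ purchases certificates directly at a given spot price $S$, its optimal demand is $\bm{\delta_i}(\bm{P_i}(S))=\bm{\delta_i}(S)=\mathrm{E}^{\mathrm{bau}}_i-S\varrho_i$. (2) If company $i$ purchases through a financial intermediary, then under the feasibility assumption $0<S\le2\lambda-\max_j(\mathrm{E}^{\mathrm{bau}}_j/\varrho_j)$ on the spot price $S$, the intermediated price is $\bm{P_i}(S)=\tfrac12(S+\mathrm{E}^{\mathrm{bau}}_i/\varrho_i)$, and the company's optimal demand at this price is $\bm{\delta_i}(\bm{P_i}(S))=\tfrac12(\mathrm{E}^{\mathrm{bau}}_i-S\varrho_i)$.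
   Context: Company $i$ has raw wealth $\pi_i(q)=\pi^0_iq-\tfrac{\pi^1_i}{2}q^2$, emissions $q$ reduced to $e^{-a}q$ at green cost $\tfrac{\gamma_i}{2}[(1-e^{-a})q]^2$. Facing a certificate price $P$, it maximizes $\pi_i(q)-\tfrac{\gamma_i}{2}[(1-e^{-a})q]^2-\delta P-\lambda(e^{-a}q-\delta)^+$ over $(q,a,\delta)$; its optimal certificate demand is denoted $\bm{\delta_i}(P)$ (equal to $\mathrm{E}^{\mathrm{bau}}_i-P\varrho_i$ for $0<P\le\lambda$). When buying directly at the auction, $\bm{P_i}(S)=S$. When buying through a financial intermediary that buys at spot price $S$, the intermediary sets $\bm{P_i}(S)=\arg\max_{P\in[S,\lambda]}\bm{\delta_i}(P)(P-S)$. *)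

theory Defs
  imports Complex_Main
begin

definition raw_wealth :: "real \<Rightarrow> real \<Rightarrow> real \<Rightarrow> real" where
  "raw_wealth p0 p1 q = p0 * q - p1 / 2 * q\<^sup>2"

definition objective ::
  "real \<Rightarrow> real \<Rightarrow> real \<Rightarrow> real \<Rightarrow> real \<Rightarrow> real \<Rightarrow> real \<Rightarrow> real \<Rightarrow> real" where
  "objective p0 p1 g lam P q a d =
     raw_wealth p0 p1 q - g / 2 * ((1 - exp (- a)) * q)\<^sup>2 - d * P
     - lam * max 0 (exp (- a) * q - d)"

definition admissible :: "real \<Rightarrow> real \<Rightarrow> real \<Rightarrow> bool" where
  "admissible q a d \<longleftrightarrow> q \<ge> 0 \<and> a \<ge> 0 \<and> d \<ge> 0"

definition optimal_demands :: "real \<Rightarrow> real \<Rightarrow> real \<Rightarrow> real \<Rightarrow> real \<Rightarrow> real set" where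
  "optimal_demands p0 p1 g lam P =
     {d. \<exists>q a. admissible q a d \<and>
          (\<forall>q' a' d'. admissible q' a' d' \<longrightarrow>
             objective p0 p1 g lam P q' a' d' \<le> objective p0 p1 g lam P q a d)}"

text \<open>Optimal certificate demand delta_i(P). For P < lambda the optimal d is unique;
  at P = lambda every d up to the emission level is optimal and we take the largest one
  (convention: Sup).\<close>
definition demand :: "real \<Rightarrow> real \<Rightarrow> real \<Rightarrow> real \<Rightarrow> real \<Rightarrow> real" where
  "demand p0 p1 g lam P = Sup (optimal_demands p0 p1 g lam P)"

definition direct_price :: "real \<Rightarrow> real" where
  "direct_price S = S"

definition intermediary_price :: "real \<Rightarrow> real \<Rightarrow> real \<Rightarrow> real \<Rightarrow> real \<Rightarrow> real" where
  "intermediary_price p0 p1 g lam S =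
     (THE P. P \<in> {S..lam} \<and>
        (\<forall>P'\<in>{S..lam}. demand p0 p1 g lam P' * (P' - S) \<le> demand p0 p1 g lam P * (P - S)))"

definition Ebau :: "real \<Rightarrow> real \<Rightarrow> real" where
  "Ebau p0 p1 = p0 / p1"

definition rho :: "real \<Rightarrow> real \<Rightarrow> real" where
  "rho p1 g = 1 / p1 + 1 / g"

end

theory Submission imports Defs begin

lemma obj_id:
  fixes p0 p1 g lam P q a d :: real
  assumes "p1 > 0" "g > 0"
  defines "qs \<equiv> (p0 - P)/p1" and "ys \<equiv> P/g"
  shows "objective p0 p1 g lam P q a d =
     (p1/2*qs^2 + g/2*ys^2) - p1/2*(q-qs)^2 - g/2*((1-exp(-a))*q - ys)^2
     - (P*(d - exp(-a)*q) + lam * max 0 (exp(-a)*q - d))"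
proof -
  have h1: "p0 - P = p1*qs" using assms by (simp add: qs_def)
  have h2: "P = g*ys" using assms by (simp add: ys_def)
  have "p0 = p1*qs + g*ys" using h1 h2 by simp
  then show ?thesis unfolding objective_def raw_wealth_def using h2
    by (simp add: power2_eq_square algebra_simps)
qed

lemma demand_formula:
  fixes p0 p1 g lam P :: real
  assumes p1: "p1 > 0" and g: "g > 0" and P: "0 < P" "P \<le> lam"
    and small: "lam * rho p1 g < Ebau p0 p1"
  shows "demand p0 p1 g lam P = Ebau p0 p1 - P * rho p1 g"
proof -
  define qs where "qs = (p0 - P)/p1"
  define ys where "ys = P/g"
  define es where "es = qs - ys"
  have es_eq: "es = Ebau p0 p1 - P * rho p1 g"
    unfolding es_def qs_def ys_def Ebau_def rho_def using p1 g by (simp add: field_simps)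
  have "P * rho p1 g \<le> lam * rho p1 g"
    using P p1 g unfolding rho_def by (intro mult_right_mono) auto
  hence es_pos: "es > 0" using es_eq small by linarith
  have ys_pos: "ys > 0" using P g by (simp add: ys_def)
  have qs_pos: "qs > 0" using es_pos ys_pos es_def by linarith
  define as where "as = ln (qs/es)"
  have exp_as: "exp (- as) = es/qs"
    using qs_pos es_pos by (simp add: as_def exp_minus ln_div exp_diff)
  have as_nn: "as \<ge> 0" unfolding as_def using qs_pos es_pos es_def ys_pos by simp
  have key: "objective p0 p1 g lam P q a d \<le> p1/2*qs^2 + g/2*ys^2 - p1/2*(q-qs)^2 - g/2*((1-exp(-a))*q - ys)^2
     - (P*(d - exp(-a)*q) + lam * max 0 (exp(-a)*q - d))" for q a d
    using obj_id[OF p1 g, of p0 lam P q a d] unfolding qs_def ys_def by simp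
  have pen: "P*(d - t) + lam * max 0 (t - d) \<ge> 0" for d t :: real
  proof (cases "d \<ge> t")
    case True then show ?thesis using P by (simp add: max_def)
  next
    case False
    then have "P*(d - t) + lam * max 0 (t - d) = (lam - P)*(t-d)" by (simp add: max_def algebra_simps)
    then show ?thesis using False P by simp
  qed
  have opt_val: "objective p0 p1 g lam P qs as es = p1/2*qs^2 + g/2*ys^2"
  proof -
    have "(1 - exp(-as))*qs = ys" using exp_as qs_pos es_def by (simp add: field_simps)
    moreover have "exp(-as)*qs = es" using exp_as qs_pos by simp
    ultimately show ?thesis using obj_id[OF p1 g, of p0 lam P qs as es] unfolding qs_def ys_def
      by simp
  qed
  have mem: "es \<in> optimal_demands p0 p1 g lam P"
    unfolding optimal_demands_def admissible_def
  proof (intro CollectI exI conjI allI impI)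
    fix q' a' d' :: real assume "0 \<le> q' \<and> 0 \<le> a' \<and> 0 \<le> d'"
    show "objective p0 p1 g lam P q' a' d' \<le> objective p0 p1 g lam P qs as es"
    proof -
      have "0 \<le> p1/2*(q'-qs)^2" "0 \<le> g/2*((1-exp(-a'))*q' - ys)^2" using p1 g by auto
      then show ?thesis unfolding opt_val using key[of q' a' d'] pen[of d' "exp(-a')*q'"]
        by linarith
    qed
  qed (use qs_pos as_nn es_pos in auto)
  have ub: "d \<le> es" if "d \<in> optimal_demands p0 p1 g lam P" for d
  proof -
    from that obtain q a where adm: "admissible q a d" and
      opt: "objective p0 p1 g lam P qs as es \<le> objective p0 p1 g lam P q a d"
      unfolding optimal_demands_def using qs_pos as_nn es_pos admissible_def by fastforce
    have A: "0 \<le> p1/2*(q-qs)^2" "0 \<le> g/2*((1-exp(-a))*q - ys)^2" using p1 g by auto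
    have B: "p1/2*(q-qs)^2 = 0" "g/2*((1-exp(-a))*q - ys)^2 = 0"
      and C: "P*(d - exp(-a)*q) + lam * max 0 (exp(-a)*q - d) \<le> 0"
      using opt key[of q a d] pen[of d "exp(-a)*q"] A unfolding opt_val by linarith+
    have "q = qs" "(1-exp(-a))*q = ys" using B p1 g by auto
    hence "exp(-a)*q = es" unfolding es_def by (simp add: algebra_simps)
    show "d \<le> es"
    proof (rule ccontr)
      assume "\<not> d \<le> es"
      then have "P*(d - exp(-a)*q) > 0" using P \<open>exp(-a)*q = es\<close> by simp
      moreover have "lam * max 0 (exp(-a)*q - d) \<ge> 0" using P by simp
      ultimately show False using C by linarith
    qed
  qed
  have "Sup (optimal_demands p0 p1 g lam P) = es"
    by (rule cSup_eq_maximum[OF mem]) (use ub in auto)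
  then show ?thesis unfolding demand_def es_eq .
qed

theorem proposition2p6:
  fixes I :: "'c set" and p0 p1 g :: "'c \<Rightarrow> real" and lam S :: real and i :: 'c
  assumes finI: "finite I" and iI: "i \<in> I"
    and pos: "\<And>j. j \<in> I \<Longrightarrow> p0 j > 0 \<and> p1 j > 0 \<and> g j > 0"
    and lam_pos: "lam > 0"
    and lam_small: "\<And>j. j \<in> I \<Longrightarrow> lam * rho (p1 j) (g j) < Ebau (p0 j) (p1 j)"
  shows "(0 < S \<and> S \<le> lam \<longrightarrow>
            demand (p0 i) (p1 i) (g i) lam (direct_price S) = demand (p0 i) (p1 i) (g i) lam S
          \<and> demand (p0 i) (p1 i) (g i) lam S = Ebau (p0 i) (p1 i) - S * rho (p1 i) (g i))
       \<and> (0 < S \<and> S \<le> 2 * lam - (MAX j\<in>I. Ebau (p0 j) (p1 j) / rho (p1 j) (g j)) \<longrightarrow>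
            intermediary_price (p0 i) (p1 i) (g i) lam S
              = (S + Ebau (p0 i) (p1 i) / rho (p1 i) (g i)) / 2
          \<and> demand (p0 i) (p1 i) (g i) lam (intermediary_price (p0 i) (p1 i) (g i) lam S)
              = (Ebau (p0 i) (p1 i) - S * rho (p1 i) (g i)) / 2)"
proof -
  have p1: "p1 i > 0" and g: "g i > 0" using pos[OF iI] by auto
  have sm: "lam * rho (p1 i) (g i) < Ebau (p0 i) (p1 i)" using lam_small[OF iI] .
  define E where "E = Ebau (p0 i) (p1 i)"
  define r where "r = rho (p1 i) (g i)"
  have r_pos: "r > 0" using p1 g by (simp add: r_def rho_def add_pos_pos)
  have dem: "demand (p0 i) (p1 i) (g i) lam P = E - P * r" if "0 < P" "P \<le> lam" for P
    using demand_formula[OF p1 g that sm] by (simp add: E_def r_def)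
  have part1: "0 < S \<and> S \<le> lam \<longrightarrow>
            demand (p0 i) (p1 i) (g i) lam (direct_price S) = demand (p0 i) (p1 i) (g i) lam S
          \<and> demand (p0 i) (p1 i) (g i) lam S = Ebau (p0 i) (p1 i) - S * rho (p1 i) (g i)"
    using dem by (simp add: direct_price_def E_def r_def)
  have part2: "intermediary_price (p0 i) (p1 i) (g i) lam S = (S + E / r) / 2
          \<and> demand (p0 i) (p1 i) (g i) lam (intermediary_price (p0 i) (p1 i) (g i) lam S)
              = (E - S * r) / 2"
    if S: "0 < S" "S \<le> 2 * lam - (MAX j\<in>I. Ebau (p0 j) (p1 j) / rho (p1 j) (g j))"
  proof -
    have "E / r \<le> (MAX j\<in>I. Ebau (p0 j) (p1 j) / rho (p1 j) (g j))"
      unfolding E_def r_def using finI iI by (intro Max_ge) auto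
    hence S2: "S + E / r \<le> 2 * lam" using S by linarith
    have "lam < E / r" using sm r_pos by (simp add: E_def r_def field_simps)
    hence Slam: "S < lam" using S2 by linarith
    define Ps where "Ps = (S + E / r) / 2"
    have Ps_in: "Ps \<in> {S..lam}" using S2 Slam \<open>lam < E / r\<close> by (simp add: Ps_def)
    have fid: "demand (p0 i) (p1 i) (g i) lam P * (P - S) = (E - Ps * r) * (Ps - S) - r * (P - Ps)^2"
      if "P \<in> {S..lam}" for P
    proof -
      have d: "demand (p0 i) (p1 i) (g i) lam P = E - P * r" using that S by (intro dem) auto
      have e: "E = r * (2*Ps - S)" using r_pos by (simp add: Ps_def field_simps)
      show ?thesis unfolding d e by (simp add: power2_eq_square algebra_simps)
    qed
    have ip: "intermediary_price (p0 i) (p1 i) (g i) lam S = Ps"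
      unfolding intermediary_price_def
    proof (rule the_equality)
      show "Ps \<in> {S..lam} \<and> (\<forall>P'\<in>{S..lam}. demand (p0 i) (p1 i) (g i) lam P' * (P' - S)
              \<le> demand (p0 i) (p1 i) (g i) lam Ps * (Ps - S))"
        using Ps_in fid r_pos by (simp add: fid[OF Ps_in])
    next
      fix P assume h: "P \<in> {S..lam} \<and> (\<forall>P'\<in>{S..lam}. demand (p0 i) (p1 i) (g i) lam P' * (P' - S)
              \<le> demand (p0 i) (p1 i) (g i) lam P * (P - S))"
      hence "demand (p0 i) (p1 i) (g i) lam Ps * (Ps - S) \<le> demand (p0 i) (p1 i) (g i) lam P * (P - S)"
        and Pin: "P \<in> {S..lam}" using Ps_in by auto
      hence "r * (P - Ps)^2 \<le> 0" using fid[OF Pin] fid[OF Ps_in] by simp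
      hence "(P - Ps)^2 \<le> 0" using r_pos by (simp add: mult_le_0_iff)
      thus "P = Ps" by simp
    qed
    have "demand (p0 i) (p1 i) (g i) lam Ps = E - Ps * r" using Ps_in S by (intro dem) auto
    also have "\<dots> = (E - S * r) / 2" using r_pos by (simp add: Ps_def field_simps)
    finally have D: "demand (p0 i) (p1 i) (g i) lam Ps = (E - S * r) / 2" .
    show ?thesis unfolding ip by (intro conjI Ps_def D)
  qed
  show ?thesis using part1 part2 by (simp add: E_def r_def)
qed

end
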